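(* Let $\psi\in\mathbb{R}[x]$ have a zero of multiplicity $2$ at $0$, and let $\psi=\psi_2+\dots+\psi_t$ be its expansion into homogeneous polynomials $\psi_j$ of degree $j$, with $\psi_2\neq 0$ and $\psi_t\ne 0$. If the Fischer operator $F_\psi:\mathbb{R}[x]\to\mathbb{R}[x]$ is surjective, then the Fischer operator $F_{\psi_2}:\mathbb{R}[x]\to\mathbb{R}[x]$ is bijective. Moreover, $F_\psi$ is bijective.
   Context: $\mathbb{R}[x]$ denotes the real polynomials in $d$ variables, $\Delta$ the Laplacian, and for a polynomial $\varphi$ the Fischer operator is $F_\varphi(q)=\Delta(\varphi q)$ for $q\in\mathbb{R}[x]$. A polynomial is homogeneous of degree $j$ if $f(rx)=r^jf(x)$ for all $r>0$, $x\in\mathbb{R}^d$. The multiplicity of a zero $x_0$ of $\psi$ is the largest $N$ such that all partial derivatives $\partial^\alpha\psi(x_0)$ with $|\alpha|\le N-1$ vanish. *)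

theory Defs
  imports "HOL-Analysis.Analysis" "HOL-Library.Poly_Mapping"
begin

text \<open>Real polynomials in d variables, d = CARD('n), variables indexed by the finite type 'n.\<close>
type_synonym 'n rpoly = "('n \<Rightarrow>\<^sub>0 nat) \<Rightarrow>\<^sub>0 real"

definition peval :: "'n::finite rpoly \<Rightarrow> ('n \<Rightarrow> real) \<Rightarrow> real" where
  "peval p x = (\<Sum>a\<in>Poly_Mapping.keys p. Poly_Mapping.lookup p a * (\<Prod>i\<in>UNIV. x i ^ Poly_Mapping.lookup (a::'n \<Rightarrow>\<^sub>0 nat) i))"

definition pdiff :: "'n \<Rightarrow> 'n rpoly \<Rightarrow> 'n rpoly" where
  "pdiff i p = (\<Sum>a\<in>Poly_Mapping.keys p.
      Poly_Mapping.single (a - Poly_Mapping.single i 1) (Poly_Mapping.lookup p a * of_nat (Poly_Mapping.lookup (a::'n \<Rightarrow>\<^sub>0 nat) i)))"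

definition pdiffs :: "'n list \<Rightarrow> 'n rpoly \<Rightarrow> 'n rpoly" where
  "pdiffs is p = foldr pdiff is p"

definition laplacian :: "'n::finite rpoly \<Rightarrow> 'n rpoly" where
  "laplacian p = (\<Sum>i\<in>UNIV. pdiff i (pdiff i p))"

definition fischer :: "'n::finite rpoly \<Rightarrow> 'n rpoly \<Rightarrow> 'n rpoly" where
  "fischer \<phi> q = laplacian (\<phi> * q)"

definition homogeneous :: "'n::finite rpoly \<Rightarrow> nat \<Rightarrow> bool" where
  "homogeneous f j \<longleftrightarrow> (\<forall>r>0. \<forall>x. peval f (\<lambda>i. r * x i) = r ^ j * peval f x)"

definition derivs_vanish :: "'n::finite rpoly \<Rightarrow> ('n \<Rightarrow> real) \<Rightarrow> nat \<Rightarrow> bool" where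
  "derivs_vanish \<psi> x0 N \<longleftrightarrow> (\<forall>is. length is < N \<longrightarrow> peval (pdiffs is \<psi>) x0 = 0)"

definition zero_multiplicity :: "'n::finite rpoly \<Rightarrow> ('n \<Rightarrow> real) \<Rightarrow> nat \<Rightarrow> bool" where
  "zero_multiplicity \<psi> x0 N \<longleftrightarrow> derivs_vanish \<psi> x0 N \<and> \<not> derivs_vanish \<psi> x0 (Suc N)"

end

theory Submission
  imports Defs
begin

abbreviation lookup where "lookup \<equiv> Poly_Mapping.lookup"
abbreviation keys where "keys \<equiv> Poly_Mapping.keys"

definition tdeg :: "('n::finite \<Rightarrow>\<^sub>0 nat) \<Rightarrow> nat" where
  "tdeg a = (\<Sum>i\<in>UNIV. lookup a i)"

lemma tdeg_add: "tdeg (a + b) = tdeg a + tdeg b"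
  by (simp add: tdeg_def lookup_add sum.distrib)

lemma tdeg_single: "tdeg (Poly_Mapping.single i (n::nat)) = n"
  by (simp add: tdeg_def lookup_single when_def)

lemma lookup_minus_nat: "lookup ((a::'n \<Rightarrow>\<^sub>0 nat) - b) k = lookup a k - lookup b k"
  by (rule lookup_minus)

definition restr :: "(('n \<Rightarrow>\<^sub>0 nat) \<Rightarrow> bool) \<Rightarrow> 'n rpoly \<Rightarrow> 'n rpoly" where
  "restr P f = Abs_poly_mapping (\<lambda>a. if P a then lookup f a else 0)"

lemma lookup_restr: "lookup (restr P f) a = (if P a then lookup f a else 0)"
proof -
  have "finite {a. (if P a then lookup f a else 0) \<noteq> 0}"
    by (rule finite_subset[of _ "keys f"]) (auto simp: in_keys_iff)
  then show ?thesis unfolding restr_def by simp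
qed

definition scl :: "real \<Rightarrow> 'n rpoly \<Rightarrow> 'n rpoly" where
  "scl c p = Poly_Mapping.map ((*) c) p"

lemma lookup_scl: "lookup (scl c p) a = c * lookup p a"
  unfolding scl_def by transfer (simp add: when_def)

lemma scl_mult: "scl c p = Poly_Mapping.single 0 c * p"
  unfolding scl_def by (rule mult_map_scale_conv_mult)


lemma minus_single_iff:
  assumes "lookup (a::'n \<Rightarrow>\<^sub>0 nat) i > 0"
  shows "(a - Poly_Mapping.single i 1 = b) \<longleftrightarrow> (a = b + Poly_Mapping.single i 1)"
  using assms
  by (auto simp: poly_mapping_eq_iff fun_eq_iff lookup_minus_nat lookup_add lookup_single when_def)

lemma lookup_pdiff:
  "lookup (pdiff i p) b = lookup p (b + Poly_Mapping.single i 1) * of_nat (lookup b i + 1)"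
proof -
  let ?e = "Poly_Mapping.single i (1::nat)"
  have "lookup (pdiff i p) b = (\<Sum>a\<in>keys p. if a - ?e = b then lookup p a * of_nat (lookup a i) else 0)"
    unfolding pdiff_def lookup_sum by (simp add: lookup_single when_def eq_commute)
  also have "\<dots> = (\<Sum>a\<in>keys p. if a = b + ?e then lookup p a * of_nat (lookup a i) else 0)"
  proof (rule sum.cong[OF refl])
    fix a assume "a \<in> keys p"
    show "(if a - ?e = b then lookup p a * of_nat (lookup a i) else 0) =
          (if a = b + ?e then lookup p a * of_nat (lookup a i) else 0)"
    proof (cases "lookup a i > 0")
      case True then show ?thesis using minus_single_iff[OF True] by simp
    next
      case False
      then have "a \<noteq> b + ?e" by (auto simp: lookup_add)
      with False show ?thesis by simp
    qed
  qed
  also have "\<dots> = lookup p (b + ?e) * of_nat (lookup b i + 1)"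
    by (simp add: sum.delta lookup_add in_keys_iff)
  finally show ?thesis .
qed

lemma pdiff_add: "pdiff i (p + q) = pdiff i p + pdiff i q"
  by (rule poly_mapping_eqI) (simp add: lookup_pdiff lookup_add distrib_right)

lemma pdiff_scl: "pdiff i (scl c p) = scl c (pdiff i p)"
  by (rule poly_mapping_eqI) (simp add: lookup_pdiff lookup_scl)

lemma pdiff_restr: "pdiff i (restr P p) = restr (\<lambda>b. P (b + Poly_Mapping.single i 1)) (pdiff i p)"
  by (rule poly_mapping_eqI) (simp add: lookup_pdiff lookup_restr)

lemma laplacian_add: "laplacian (p + q) = laplacian p + laplacian q"
  by (simp add: laplacian_def pdiff_add sum.distrib)

lemma lookup_laplacian: "lookup (laplacian p) b = (\<Sum>i\<in>UNIV. lookup (pdiff i (pdiff i p)) b)"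
  by (simp add: laplacian_def lookup_sum)

lemma laplacian_scl: "laplacian (scl c p) = scl c (laplacian p)"
  by (rule poly_mapping_eqI) (simp add: lookup_laplacian pdiff_scl lookup_scl sum_distrib_left)

definition comp :: "nat \<Rightarrow> 'n::finite rpoly \<Rightarrow> 'n rpoly" where
  "comp d p = restr (\<lambda>a. tdeg a = d) p"

lemma lookup_comp: "lookup (comp d p) a = (if tdeg a = d then lookup p a else 0)"
  by (simp add: comp_def lookup_restr)

lemma comp_laplacian: "comp m (laplacian p) = laplacian (comp (m+2) p)"
proof (rule poly_mapping_eqI)
  fix b
  show "lookup (comp m (laplacian p)) b = lookup (laplacian (comp (m + 2) p)) b"
    by (simp add: lookup_comp lookup_laplacian comp_def pdiff_restr lookup_restr tdeg_add tdeg_single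
        del: One_nat_def)
qed


definition hom :: "'n::finite rpoly \<Rightarrow> nat \<Rightarrow> bool" where
  "hom p d \<longleftrightarrow> (\<forall>a\<in>keys p. tdeg a = d)"

definition ordge :: "'n::finite rpoly \<Rightarrow> nat \<Rightarrow> bool" where
  "ordge p d \<longleftrightarrow> (\<forall>a\<in>keys p. d \<le> tdeg a)"

lemma comp_add: "comp d (p + q) = comp d p + comp d q"
  by (rule poly_mapping_eqI) (simp add: lookup_comp lookup_add)

lemma comp_diff: "comp d (p - q) = comp d p - comp d q"
  by (rule poly_mapping_eqI) (simp add: lookup_comp lookup_minus)

lemma comp_hom: "hom p d \<Longrightarrow> comp d p = p"
  by (rule poly_mapping_eqI) (auto simp: lookup_comp hom_def in_keys_iff)

lemma comp_avoid: "(\<And>a. a \<in> keys p \<Longrightarrow> tdeg a \<noteq> d) \<Longrightarrow> comp d p = 0"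
  by (rule poly_mapping_eqI) (auto simp: lookup_comp in_keys_iff)

lemma hom_comp: "hom (comp d p) d"
  by (auto simp: hom_def in_keys_iff lookup_comp split: if_splits)

lemma keys_mult_tdeg:
  assumes "a \<in> keys (p * q)"
  obtains b c where "b \<in> keys p" "c \<in> keys q" "tdeg a = tdeg b + tdeg c"
  using keys_mult[of p q] assms by (auto simp: tdeg_add)

lemma hom_mult: "hom p d \<Longrightarrow> hom q e \<Longrightarrow> hom (p * q) (d + e)"
  unfolding hom_def by (metis keys_mult_tdeg)

lemma ordge_mult: "ordge p d \<Longrightarrow> ordge q e \<Longrightarrow> ordge (p * q) (d + e)"
  unfolding ordge_def by (metis add_mono keys_mult_tdeg)

lemma comp_mult_hom:
  assumes "hom p d"
  shows "comp (d + m) (p * q) = p * comp m q"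
proof -
  let ?r = "q - comp m q"
  have q: "q = comp m q + ?r" by simp
  have r: "tdeg b \<noteq> m" if "b \<in> keys ?r" for b
    using that by (auto simp: in_keys_iff lookup_minus lookup_comp)
  have "comp (d + m) (p * ?r) = 0"
    by (rule comp_avoid) (metis assms hom_def keys_mult_tdeg r add_left_cancel)
  moreover have "comp (d + m) (p * comp m q) = p * comp m q"
    by (rule comp_hom, rule hom_mult[OF assms hom_comp])
  ultimately show ?thesis
    by (metis q distrib_left comp_add add_0_right)
qed

lemma hom_laplacian: "hom p (d + 2) \<Longrightarrow> hom (laplacian p) d"
  by (metis comp_laplacian comp_hom hom_comp)

lemma fischer_add: "fischer f (p + q) = fischer f p + fischer f q"
  by (simp add: fischer_def distrib_left laplacian_add)

lemma fischer_scl: "fischer f (scl c p) = scl c (fischer f p)"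
  by (simp add: fischer_def scl_mult laplacian_scl[unfolded scl_mult, symmetric] mult.left_commute)

lemma comp_fischer_hom2:
  assumes "hom f 2"
  shows "comp m (fischer f q) = fischer f (comp m q)"
  using comp_mult_hom[OF assms, of m q] by (simp add: fischer_def comp_laplacian add.commute)

lemma hom_fischer: "hom f 2 \<Longrightarrow> hom q m \<Longrightarrow> hom (fischer f q) m"
  unfolding fischer_def by (rule hom_laplacian) (metis hom_mult add.commute)


definition mon :: "('n::finite \<Rightarrow>\<^sub>0 nat) \<Rightarrow> ('n \<Rightarrow> real) \<Rightarrow> real" where
  "mon a x = (\<Prod>i\<in>UNIV. x i ^ lookup a i)"

lemma peval_superset:
  assumes "finite S" "keys p \<subseteq> S"
  shows "peval p x = (\<Sum>a\<in>S. lookup p a * mon a x)"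
  unfolding peval_def mon_def
  by (rule sum.mono_neutral_left[OF assms]) (auto simp: in_keys_iff)

lemma peval_restr: "peval (restr P p) x = (\<Sum>a\<in>keys p. if P a then lookup p a * mon a x else 0)"
proof -
  have "keys (restr P p) \<subseteq> keys p" by (auto simp: in_keys_iff lookup_restr split: if_splits)
  then show ?thesis
    by (subst peval_superset[of "keys p"]) (auto simp: lookup_restr intro!: sum.cong)
qed

definition wdeg :: "('n::finite \<Rightarrow> nat) \<Rightarrow> ('n \<Rightarrow>\<^sub>0 nat) \<Rightarrow> nat" where
  "wdeg w a = (\<Sum>i\<in>UNIV. w i * lookup a i)"

lemma mon_scale: "mon a (\<lambda>i. r ^ w i * x i) = r ^ wdeg w a * mon a x"
  by (simp add: mon_def wdeg_def power_mult_distrib prod.distrib power_mult power_sum)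

lemma peval_scale:
  "peval p (\<lambda>i. r ^ w i * x i) = (\<Sum>d\<in>wdeg w ` keys p. r ^ d * peval (restr (\<lambda>a. wdeg w a = d) p) x)"
proof -
  have "peval p (\<lambda>i. r ^ w i * x i) = (\<Sum>a\<in>keys p. lookup p a * (r ^ wdeg w a * mon a x))"
    by (simp add: peval_def mon_scale[unfolded mon_def] mon_def)
  also have "\<dots> = (\<Sum>a\<in>keys p. \<Sum>d\<in>wdeg w ` keys p. if wdeg w a = d then r ^ d * (lookup p a * mon a x) else 0)"
    by (rule sum.cong[OF refl]) (simp add: sum.delta)
  also have "\<dots> = (\<Sum>d\<in>wdeg w ` keys p. r ^ d * peval (restr (\<lambda>a. wdeg w a = d) p) x)"
    by (subst sum.swap) (simp add: peval_restr sum_distrib_left if_distrib cong: if_cong)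
  finally show ?thesis .
qed


lemma polyfun_pos_zero:
  fixes c :: "nat \<Rightarrow> real"
  assumes D: "finite D" and z: "\<And>r. r > 0 \<Longrightarrow> (\<Sum>d\<in>D. r ^ d * c d) = 0" and k: "k \<in> D"
  shows "c k = 0"
proof (rule ccontr)
  assume ck: "c k \<noteq> 0"
  define N where "N = Max D"
  define c' where "c' i = (if i \<in> D then c i else 0)" for i
  have DN: "D \<subseteq> {..N}" using D by (auto simp: N_def)
  have eq: "(\<Sum>i\<le>N. c' i * r ^ i) = (\<Sum>d\<in>D. r ^ d * c d)" for r :: real
  proof -
    have "(\<Sum>i\<le>N. c' i * r ^ i) = (\<Sum>i\<in>D. c' i * r ^ i)"
      by (rule sum.mono_neutral_right) (use DN in \<open>auto simp: c'_def\<close>)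
    then show ?thesis by (simp add: c'_def mult.commute)
  qed
  have "finite {r. (\<Sum>i\<le>N. c' i * r ^ i) = 0}"
    by (rule polyfun_roots_finite[of c' k]) (use ck k DN in \<open>auto simp: c'_def\<close>)
  moreover have "{0::real<..} \<subseteq> {r. (\<Sum>i\<le>N. c' i * r ^ i) = 0}"
    using z eq by auto
  ultimately have "finite {0::real<..}" by (rule finite_subset[rotated])
  then show False using infinite_Ioi by blast
qed

lemma restr_restr: "restr P (restr Q p) = restr (\<lambda>a. Q a \<and> P a) p"
  by (rule poly_mapping_eqI) (simp add: lookup_restr)

lemma restr_True: "restr (\<lambda>a. True) p = p"
  by (rule poly_mapping_eqI) (simp add: lookup_restr)

lemma peval_restr_wdeg_zero:
  assumes "\<And>x. peval p x = 0"
  shows "peval (restr (\<lambda>a. wdeg w a = d) p) x = 0"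
proof (cases "d \<in> wdeg w ` keys p")
  case True
  show ?thesis
    by (rule polyfun_pos_zero[OF _ _ True, where c = "\<lambda>d. peval (restr (\<lambda>a. wdeg w a = d) p) x"])
       (use assms peval_scale[of p _ w x, symmetric] in auto)
next
  case False
  then have "restr (\<lambda>a. wdeg w a = d) p = 0"
    by (intro poly_mapping_eqI) (force simp: lookup_restr in_keys_iff)
  then show ?thesis by (simp add: peval_def)
qed

lemma identity_aux:
  assumes "\<And>x. peval p x = 0" "finite S"
  shows "peval (restr (\<lambda>b. \<forall>i\<in>S. lookup b i = lookup a i) p) x = 0"
  using assms(2)
proof (induction S arbitrary: x)
  case empty
  then show ?case using assms(1) by (simp add: restr_True)
next
  case (insert i S)
  let ?w = "\<lambda>k. if k = i then 1 else 0 :: nat"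
  have w: "wdeg ?w b = lookup b i" for b
  proof -
    have "wdeg ?w b = (\<Sum>k\<in>UNIV. if k = i then lookup b k else 0)"
      unfolding wdeg_def by (rule sum.cong) auto
    then show ?thesis by simp
  qed
  have "peval (restr (\<lambda>b. wdeg ?w b = lookup a i) (restr (\<lambda>b. \<forall>i\<in>S. lookup b i = lookup a i) p)) x = 0"
    by (rule peval_restr_wdeg_zero) (use insert in auto)
  moreover have "restr (\<lambda>b. wdeg ?w b = lookup a i) (restr (\<lambda>b. \<forall>i\<in>S. lookup b i = lookup a i) p)
     = restr (\<lambda>b. \<forall>i\<in>insert i S. lookup b i = lookup a i) p"
    unfolding restr_restr w by (rule arg_cong2[where f=restr]) auto
  ultimately show ?case by simp
qed

lemma identity_thm:
  fixes p :: "'n::finite rpoly"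
  assumes "\<And>x. peval p x = 0"
  shows "p = 0"
proof (rule poly_mapping_eqI)
  fix a
  have "peval (restr (\<lambda>b. \<forall>i\<in>UNIV. lookup b i = lookup a i) p) (\<lambda>_. 1) = 0"
    by (rule identity_aux[OF assms]) simp
  moreover have "restr (\<lambda>b. \<forall>i\<in>UNIV. lookup b i = lookup a i) p = restr (\<lambda>b. b = a) p"
    by (rule arg_cong2[where f=restr]) (auto simp: poly_mapping_eq_iff fun_eq_iff)
  moreover have "peval (restr (\<lambda>b. b = a) p) (\<lambda>_. 1) = lookup p a"
    by (simp add: peval_restr mon_def sum.delta in_keys_iff if_distrib cong: if_cong)
  ultimately show "lookup p a = lookup 0 a" by simp
qed


lemma wdeg_one: "wdeg (\<lambda>_. 1) = tdeg"
  by (simp add: wdeg_def tdeg_def fun_eq_iff)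

lemma homogeneous_hom:
  assumes "homogeneous f j"
  shows "hom f j"
proof -
  let ?D = "tdeg ` keys f"
  let ?G = "\<lambda>x d. peval (comp d f) x"
  have sc: "peval f (\<lambda>i. r * x i) = (\<Sum>d\<in>?D. r ^ d * ?G x d)" for r x
    using peval_scale[of f r "\<lambda>_. 1" x] unfolding wdeg_one comp_def by simp
  have G0: "?G x d = 0" if "d \<notin> ?D" for x d
  proof -
    have "comp d f = 0" by (rule comp_avoid) (use that in auto)
    then show ?thesis by (simp add: peval_def)
  qed
  have z: "?G x d = 0" if "d \<noteq> j" for x d
  proof (cases "d \<in> ?D")
    case False then show ?thesis by (rule G0)
  next
    case True
    define c where "c d' = ?G x d' - (if d' = j then (\<Sum>d\<in>insert j ?D. ?G x d) else 0)" for d'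
    have "c d = 0"
    proof (rule polyfun_pos_zero[of "insert j ?D" c])
      fix r :: real assume r: "r > 0"
      have s: "(\<Sum>d\<in>insert j ?D. r ^ d * ?G x d) = (\<Sum>d\<in>?D. r ^ d * ?G x d)" for r
        by (rule sum.mono_neutral_right) (use G0 in auto)
      have "peval f (\<lambda>i. r * x i) = r ^ j * peval f x"
        using assms r unfolding homogeneous_def by blast
      then have "(\<Sum>d\<in>insert j ?D. r ^ d * ?G x d) = r ^ j * (\<Sum>d\<in>insert j ?D. ?G x d)"
        using sc[of r x] sc[of 1 x] s[of r] s[of 1] by simp
      then show "(\<Sum>d\<in>insert j ?D. r ^ d * c d) = 0"
        by (simp add: c_def right_diff_distrib sum_subtractf if_distrib[where f="\<lambda>v. r ^ _ * v"] 
            sum.delta cong: if_cong)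
    qed (use True in auto)
    then show ?thesis using that by (simp add: c_def)
  qed
  have "comp d f = 0" if "d \<noteq> j" for d
    by (rule identity_thm) (use z that in auto)
  then show ?thesis
    unfolding hom_def
    by (metis lookup_comp lookup_zero in_keys_iff)
qed




context vector_space begin

lemma surj_on_imp_inj_on:
  assumes V: "subspace V" and VM: "V \<subseteq> span M" and M: "finite M"
    and add: "\<And>x y. f (x + y) = f x + f y" and sc: "\<And>c x. f (scale c x) = scale c (f x)"
    and surj: "V \<subseteq> f ` V"
  shows "inj_on f V"
proof -
  interpret h: module_hom scale scale f
    by unfold_locales (auto simp: add sc)
  have ker: "v = 0" if v: "v \<in> V" "f v = 0" for v
  proof (rule ccontr)
    assume v0: "v \<noteq> 0"
    have "{v} \<subseteq> V" "independent {v}" using v v0 by auto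
    then obtain B where B: "{v} \<subseteq> B" "B \<subseteq> V" "independent B" "V \<subseteq> span B"
      by (rule maximal_independent_subset_extend)
    have fB: "finite B" using independent_span_bound[OF M B(3)] B(2) VM by auto
    have cB: "card B = dim V" by (rule basis_card_eq_dim[OF B(2) B(4) B(3)])
    have "V \<subseteq> f ` span B" using surj B(4) by blast
    also have "\<dots> = span (f ` B)" by (rule h.span_image[symmetric])
    finally have V1: "V \<subseteq> span (f ` B)" .
    have fBi: "f ` B = insert 0 (f ` (B - {v}))" using B(1) v by auto
    have "V \<subseteq> span (f ` (B - {v}))" using V1 unfolding fBi by simp
    then have "dim V \<le> card (f ` (B - {v}))" by (rule dim_le_card) (use fB in auto)
    also have "\<dots> \<le> card (B - {v})" by (rule card_image_le) (use fB in auto)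
    also have "\<dots> < card B" by (rule card_Diff1_less) (use fB B(1) in auto)
    finally show False using cB by simp
  qed
  show ?thesis
  proof (rule inj_onI)
    fix x y assume xy: "x \<in> V" "y \<in> V" "f x = f y"
    have "f (x - y) = 0" using xy(3) h.diff by simp
    moreover have "x - y \<in> V" using V xy by (simp add: subspace_diff)
    ultimately have "x - y = 0" using ker by blast
    then show "x = y" by simp
  qed
qed

end

lemma vs_scl: "vector_space scl"
  by unfold_locales (rule poly_mapping_eqI, simp add: lookup_scl lookup_add algebra_simps)+

lemma finite_tdeg: "finite {a::'n::finite \<Rightarrow>\<^sub>0 nat. tdeg a = k}"
proof -
  have fin: "finite (Pi UNIV (\<lambda>_::'n. {..k}))"
    using finite_PiE[of "UNIV::'n set" "\<lambda>_. {..k}"] by (simp only: PiE_UNIV_domain finite_atMost finite)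
  have "lookup ` {a::'n \<Rightarrow>\<^sub>0 nat. tdeg a = k} \<subseteq> Pi UNIV (\<lambda>_. {..k})"
  proof (rule subsetI)
    fix f assume "f \<in> lookup ` {a::'n \<Rightarrow>\<^sub>0 nat. tdeg a = k}"
    then obtain a where a: "tdeg a = k" "f = lookup a" by blast
    have "lookup a i \<le> k" for i unfolding a(1)[symmetric] tdeg_def by (rule member_le_sum) auto
    then show "f \<in> Pi UNIV (\<lambda>_. {..k})" using a by auto
  qed
  then have "finite (lookup ` {a::'n \<Rightarrow>\<^sub>0 nat. tdeg a = k})" using fin by (rule finite_subset)
  moreover have "inj_on lookup {a::'n \<Rightarrow>\<^sub>0 nat. tdeg a = k}"
    by (rule inj_onI) (metis poly_mapping_eqI)
  ultimately show ?thesis by (rule finite_imageD)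
qed


lemma sum_monomials: "p = (\<Sum>a\<in>keys p. scl (lookup p a) (Poly_Mapping.single a 1))"
proof (rule poly_mapping_eqI)
  fix b
  have "lookup (\<Sum>a\<in>keys p. scl (lookup p a) (Poly_Mapping.single a 1)) b
      = (\<Sum>a\<in>keys p. if b = a then lookup p a else 0)"
    unfolding lookup_sum by (rule sum.cong) (auto simp: lookup_scl lookup_single when_def)
  also have "\<dots> = lookup p b" by (simp add: sum.delta in_keys_iff)
  finally show "lookup p b = lookup (\<Sum>a\<in>keys p. scl (lookup p a) (Poly_Mapping.single a 1)) b" ..
qed

lemma laplacian_zero: "laplacian 0 = 0"
  by (rule poly_mapping_eqI) (simp add: lookup_laplacian lookup_pdiff)

lemma fischer_zero: "fischer f 0 = 0"
  by (simp add: fischer_def laplacian_zero)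

lemma fischer_diff: "fischer f (p - q) = fischer f p - fischer f q"
  using fischer_add[of f "p - q" q] by (simp add: algebra_simps)

lemma fischer_sum: "finite D \<Longrightarrow> fischer f (sum g D) = (\<Sum>d\<in>D. fischer f (g d))"
  by (induction D rule: finite_induct) (simp_all add: fischer_zero fischer_add)

lemma hom_zero: "hom 0 d" by (simp add: hom_def)

lemma fin_inj_hom:
  fixes P :: "'n::finite rpoly set"
  assumes "P = {q. hom q k}" "\<And>q. q \<in> P \<Longrightarrow> hom (F q) k"
    "\<And>x y. F (x + y) = F x + F y" "\<And>c x. F (scl c x) = scl c (F x)"
    "P \<subseteq> F ` P"
  shows "inj_on F P"
proof -
  interpret V: vector_space "scl :: real \<Rightarrow> 'n rpoly \<Rightarrow> 'n rpoly" by (rule vs_scl)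
  let ?M = "(\<lambda>a. Poly_Mapping.single a (1::real)) ` {a::'n \<Rightarrow>\<^sub>0 nat. tdeg a = k}"
  have sub: "V.subspace P"
    unfolding V.subspace_def assms(1) hom_def
    by (auto simp: in_keys_iff lookup_add lookup_scl)
  have span: "P \<subseteq> V.span ?M"
  proof
    fix q assume "q \<in> P"
    then have hq: "hom q k" using assms(1) by simp
    show "q \<in> V.span ?M"
      by (subst sum_monomials) (intro V.span_sum V.span_scale V.span_base, use hq in \<open>auto simp: hom_def\<close>)
  qed
  show ?thesis
    by (rule V.surj_on_imp_inj_on[OF sub span _ assms(3,4,5)]) (simp add: finite_tdeg)
qed

theorem mainTheorem6:
  fixes \<psi> :: "'n::finite rpoly" and \<psi>s :: "nat \<Rightarrow> 'n rpoly" and t :: nat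
  assumes "zero_multiplicity \<psi> (\<lambda>i. 0) 2"
    and "\<psi> = (\<Sum>j=2..t. \<psi>s j)"
    and "\<And>j. 2 \<le> j \<Longrightarrow> j \<le> t \<Longrightarrow> homogeneous (\<psi>s j) j"
    and "\<psi>s 2 \<noteq> 0" and "\<psi>s t \<noteq> 0"
    and "surj (fischer \<psi>)"
  shows "bij (fischer (\<psi>s 2)) \<and> bij (fischer \<psi>)"
proof -
  define \<phi> where "\<phi> = \<psi>s 2"
  define R where "R = (\<Sum>j=3..t. \<psi>s j)"
  have t2: "2 \<le> t"
  proof (rule ccontr)
    assume "\<not> 2 \<le> t"
    then have "\<psi> = 0" using assms(2) by simp
    then have "fischer \<psi> q = 0" for q by (simp add: fischer_def laplacian_zero)
    moreover obtain q where "fischer \<psi> q = 1" using assms(6) by (metis surjD)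
    ultimately show False by simp
  qed
  have psi: "\<psi> = \<phi> + R"
    using assms(2) t2 by (simp add: \<phi>_def R_def sum.atLeast_Suc_atMost numeral_3_eq_3)
  have hphi: "hom \<phi> 2" unfolding \<phi>_def by (rule homogeneous_hom, rule assms(3)) (use t2 in auto)
  have oR: "ordge R 3"
    unfolding ordge_def
  proof
    fix a assume "a \<in> keys R"
    then obtain j where j: "j \<in> {3..t}" "a \<in> keys (\<psi>s j)" using keys_sum[of \<psi>s "{3..t}"] R_def by blast
    have "hom (\<psi>s j) j" by (rule homogeneous_hom, rule assms(3)) (use j in auto)
    then show "3 \<le> tdeg a" using j by (auto simp: hom_def)
  qed
  have key: "comp m (fischer \<psi> q) = fischer \<phi> (comp m q)" if "ordge q m" for q m
  proof -
    have "ordge (R * q) (3 + m)" by (rule ordge_mult[OF oR that])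
    then have c0: "comp (m + 2) (R * q) = 0"
      by (intro comp_avoid) (auto simp: ordge_def)
    have "comp m (fischer \<psi> q) = laplacian (comp (m+2) (\<phi> * q) + comp (m + 2) (R * q))"
      by (simp add: fischer_def comp_laplacian psi distrib_right comp_add)
    also have "comp (m+2) (\<phi> * q) = \<phi> * comp m q"
      using comp_mult_hom[OF hphi, of m q] by (simp add: add.commute)
    finally show ?thesis using c0 by (simp add: fischer_def)
  qed
  define P where "P k = {q::'n rpoly. hom q k}" for k
  have bijk: "inj_on (fischer \<phi>) (P k) \<and> P k \<subseteq> fischer \<phi> ` P k" for k
  proof (induction k rule: less_induct)
    case (less k)
    have surjk: "P k \<subseteq> fischer \<phi> ` P k"
    proof
      fix f assume "f \<in> P k"
      then have hf: "hom f k" by (simp add: P_def)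
      obtain q where q: "fischer \<psi> q = f" using assms(6) by (metis surjD)
      have "j \<le> k \<Longrightarrow> ordge q j" for j
      proof (induction j)
        case 0 then show ?case by (simp add: ordge_def)
      next
        case (Suc j)
        then have oj: "ordge q j" and jk: "j < k" by auto
        have "comp j f = 0" by (rule comp_avoid) (use hf jk in \<open>auto simp: hom_def\<close>)
        then have "fischer \<phi> (comp j q) = fischer \<phi> 0"
          using key[OF oj] q by (simp add: fischer_zero)
        moreover have "comp j q \<in> P j" "0 \<in> P j" by (simp_all add: P_def hom_comp hom_zero)
        ultimately have cj: "comp j q = 0" using less.IH[OF jk] by (meson inj_onD)
        show ?case unfolding ordge_def
        proof
          fix a assume a: "a \<in> keys q"
          have "lookup (comp j q) a = 0" by (simp add: cj)
          then have "tdeg a \<noteq> j" using a by (auto simp: lookup_comp in_keys_iff split: if_splits)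
          then show "Suc j \<le> tdeg a" using oj a by (auto simp: ordge_def)
        qed
      qed
      then have "ordge q k" by simp
      then have "f = fischer \<phi> (comp k q)" using key[of q k] q comp_hom[OF hf] by simp
      moreover have "comp k q \<in> P k" by (simp add: P_def hom_comp)
      ultimately show "f \<in> fischer \<phi> ` P k" by blast
    qed
    have "inj_on (fischer \<phi>) (P k)"
      by (rule fin_inj_hom[OF P_def _ fischer_add fischer_scl surjk])
         (simp add: P_def hom_fischer[OF hphi])
    with surjk show ?case by simp
  qed
  have injphi: "inj (fischer \<phi>)"
  proof (rule injI)
    fix x y assume xy: "fischer \<phi> x = fischer \<phi> y"
    show "x = y"
    proof (rule poly_mapping_eqI)
      fix a :: "'n \<Rightarrow>\<^sub>0 nat"
      let ?d = "tdeg a"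
      have "fischer \<phi> (comp ?d x) = fischer \<phi> (comp ?d y)"
        using comp_fischer_hom2[OF hphi] xy by metis
      moreover have "comp ?d x \<in> P ?d" "comp ?d y \<in> P ?d" by (simp_all add: P_def hom_comp)
      ultimately have "comp ?d x = comp ?d y" using bijk[of ?d] by (meson inj_onD)
      then have "lookup (comp ?d x) a = lookup (comp ?d y) a" by simp
      then show "lookup x a = lookup y a" by (simp add: lookup_comp)
    qed
  qed
  have surjphi: "surj (fischer \<phi>)"
  proof -
    have "f \<in> range (fischer \<phi>)" for f
    proof -
      let ?D = "tdeg ` keys f"
      have "comp d f \<in> fischer \<phi> ` P d" for d
        using bijk[of d] by (auto simp: P_def hom_comp)
      then have "\<forall>d. \<exists>h. comp d f = fischer \<phi> h" by blast
      then obtain g where g: "\<And>d. comp d f = fischer \<phi> (g d)" by metis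
      have "f = (\<Sum>d\<in>?D. comp d f)"
      proof (rule poly_mapping_eqI)
        fix a
        have "lookup (\<Sum>d\<in>?D. comp d f) a = (\<Sum>d\<in>?D. if tdeg a = d then lookup f a else 0)"
          by (simp add: lookup_sum lookup_comp)
        also have "\<dots> = lookup f a" by (simp add: sum.delta) (metis image_eqI in_keys_iff)
        finally show "lookup f a = lookup (\<Sum>d\<in>?D. comp d f) a" ..
      qed
      also have "\<dots> = fischer \<phi> (\<Sum>d\<in>?D. g d)" by (simp add: fischer_sum g)
      finally show ?thesis by blast
    qed
    then show ?thesis by blast
  qed
  have injpsi: "inj (fischer \<psi>)"
  proof (rule injI)
    fix x y assume xy: "fischer \<psi> x = fischer \<psi> y"
    show "x = y"
    proof (rule ccontr)
      assume "x \<noteq> y"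
      define q where "q = x - y"
      have q0: "q \<noteq> 0" using \<open>x \<noteq> y\<close> by (simp add: q_def)
      have fq: "fischer \<psi> q = 0" using xy by (simp add: q_def fischer_diff)
      define m where "m = Min (tdeg ` keys q)"
      have ne: "keys q \<noteq> {}" using q0 by simp
      have oq: "ordge q m" by (auto simp: ordge_def m_def)
      have "m \<in> tdeg ` keys q" unfolding m_def by (rule Min_in) (use ne in auto)
      then obtain a where a: "a \<in> keys q" "tdeg a = m" by auto
      have "fischer \<phi> (comp m q) = fischer \<phi> 0"
      proof -
        have "comp m (0::'n rpoly) = 0" by (rule comp_avoid) simp
        then show ?thesis using key[OF oq] fq by (simp add: fischer_zero)
      qed
      then have "comp m q = 0" using injphi by (meson injD)
      then have "lookup (comp m q) a = 0" by simp
      then show False using a by (simp add: lookup_comp in_keys_iff)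
    qed
  qed
  show ?thesis
    using injphi surjphi injpsi assms(6) by (simp add: bij_def \<phi>_def)
qed

end
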